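(* Let $f_{\mathrm{MCP}}$ be the maximum coordinate plurality rule. In the $\ell^1$ linear social choice setting, the worst-case distortion of $f_{\mathrm{MCP}}$ satisfies $\mathrm{D}(f_{\mathrm{MCP}}) = O(d^3)$.
   Context: Setting ($\ell^1$ linear social choice). Fix a dimension $d\ge 1$ and let $\Delta_d=\{x\in\mathbb{R}^d_{\ge 0}:\sum_i x^i=1\}$ (superscripts denote coordinates). An instance consists of a finite set $V$ of $n$ voters and a finite set $C$ of $m$ candidates, each identified with a vector in $\Delta_d$, with the expressiveness assumption that every voter vector lies in $\mathrm{Cone}(C)$, the set of nonnegative linear combinations of candidate vectors. Voter $v$'s utility for candidate $c$ is $u_v(c)=v^\top c$. Each voter reports a ranking $\sigma_v$ of $C$ consistent with its utilities ($c$ is ranked above $c'$ only if $u_v(c)\ge u_v(c')$; ties broken arbitrarily); $\sigma=(\sigma_v)_{v\in V}$ is the preference profile. The utilitarian welfare of $c$ is $\mathrm{UW}(c)=\sum_{v\in V}u_v(c)$. A (possibly randomized) voting rule $f$ outputs a distribution over $C$ based on the profile (and, when its definition uses them, the candidate vectors), but never sees the voter vectors. Its distortion on an instance is $\max_{c\in C}\mathrm{UW}(c)/\mathbb{E}_{c\sim f}[\mathrm{UW}(c)]$, and its worst-case distortion $\mathrm{D}(f)$ is the supremum of this ratio over all instances (all $n,m$, all consistent rankings), viewed as a function of $d$. Maximum coordinate plurality: form a set $\hat C\subseteq C$ containing, for each coordinate $i\in[d]$, one candidate $c\in C$ maximizing the coordinate $c^i$ over $C$ (so $|\hat C|\le d$);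 restrict every voter's ranking to $\hat C$ and output a plurality winner (a candidate of $\hat C$ ranked first among $\hat C$ by the largest number of voters, ties broken arbitrarily). *)

theory Defs
  imports Main "HOL-Library.FuncSet" Complex_Main
begin

type_synonym vec = "nat \<Rightarrow> real"

definition in_simplex :: "nat \<Rightarrow> vec \<Rightarrow> bool" where
  "in_simplex d x \<longleftrightarrow> (\<forall>i<d. 0 \<le> x i) \<and> (\<forall>i\<ge>d. x i = 0) \<and> (\<Sum>i<d. x i) = 1"

definition in_cone :: "nat \<Rightarrow> vec set \<Rightarrow> vec \<Rightarrow> bool" where
  "in_cone d C x \<longleftrightarrow> (\<exists>a::vec \<Rightarrow> real. (\<forall>c\<in>C. 0 \<le> a c) \<and>
      (\<forall>i<d. x i = (\<Sum>c\<in>C. a c * c i)))"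

definition util :: "nat \<Rightarrow> vec \<Rightarrow> vec \<Rightarrow> real" where
  "util d v c = (\<Sum>i<d. v i * c i)"

definition lsc_instance :: "nat \<Rightarrow> 'v set \<Rightarrow> ('v \<Rightarrow> vec) \<Rightarrow> vec set \<Rightarrow> bool" where
  "lsc_instance d V vv C \<longleftrightarrow> finite V \<and> finite C \<and> (\<forall>c\<in>C. in_simplex d c) \<and>
     (\<forall>v\<in>V. in_simplex d (vv v) \<and> in_cone d C (vv v))"

definition consistent_ranking :: "nat \<Rightarrow> vec set \<Rightarrow> vec \<Rightarrow> vec list \<Rightarrow> bool" where
  "consistent_ranking d C v r \<longleftrightarrow> distinct r \<and> set r = C \<and>
     (\<forall>i j. i < j \<longrightarrow> j < length r \<longrightarrow> util d v (r ! j) \<le> util d v (r ! i))"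

definition consistent_profile ::
    "nat \<Rightarrow> 'v set \<Rightarrow> ('v \<Rightarrow> vec) \<Rightarrow> vec set \<Rightarrow> ('v \<Rightarrow> vec list) \<Rightarrow> bool" where
  "consistent_profile d V vv C \<sigma> \<longleftrightarrow> (\<forall>v\<in>V. consistent_ranking d C (vv v) (\<sigma> v))"

definition UW :: "nat \<Rightarrow> 'v set \<Rightarrow> ('v \<Rightarrow> vec) \<Rightarrow> vec \<Rightarrow> real" where
  "UW d V vv c = (\<Sum>v\<in>V. util d (vv v) c)"

definition mcp_set :: "nat \<Rightarrow> vec set \<Rightarrow> vec set \<Rightarrow> bool" where
  "mcp_set d C Ch \<longleftrightarrow> (\<exists>sel. (\<forall>i<d. sel i \<in> C \<and> (\<forall>c\<in>C. c i \<le> sel i i)) \<and>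
                               Ch = sel ` {..<d})"

definition top_in :: "vec set \<Rightarrow> vec list \<Rightarrow> vec" where
  "top_in S r = hd (filter (\<lambda>c. c \<in> S) r)"

definition plurality_winner :: "'v set \<Rightarrow> ('v \<Rightarrow> vec list) \<Rightarrow> vec set \<Rightarrow> vec \<Rightarrow> bool" where
  "plurality_winner V \<sigma> S w \<longleftrightarrow> w \<in> S \<and>
     (\<forall>c\<in>S. card {v\<in>V. top_in S (\<sigma> v) = c} \<le> card {v\<in>V. top_in S (\<sigma> v) = w})"

text \<open>Possible outputs of maximum coordinate plurality (any tie-breaking).\<close>
definition mcp_outcome :: "nat \<Rightarrow> 'v set \<Rightarrow> vec set \<Rightarrow> ('v \<Rightarrow> vec list) \<Rightarrow> vec \<Rightarrow> bool" where
  "mcp_outcome d V C \<sigma> w \<longleftrightarrow> (\<exists>Ch. mcp_set d C Ch \<and> plurality_winner V \<sigma> Ch w)"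

end

theory Submission
  imports Defs
begin

lemma top_pos:
  "x \<in> set r \<Longrightarrow> P x \<Longrightarrow> \<exists>i j. i \<le> j \<and> j < length r \<and> r!i = hd (filter P r) \<and> r!j = x"
proof (induction r)
  case Nil then show ?case by simp
next
  case (Cons a r)
  show ?case
  proof (cases "P a")
    case True
    from Cons.prems(1) obtain j where "j < length (a#r)" "(a#r)!j = x"
      by (metis in_set_conv_nth)
    then show ?thesis using True by (intro exI[of _ 0] exI[of _ j]) auto
  next
    case False
    then have "x \<in> set r" using Cons.prems by auto
    from Cons.IH[OF this Cons.prems(2)] obtain i j where
      "i \<le> j" "j < length r" "r!i = hd (filter P r)" "r!j = x" by blast
    then show ?thesis using False by (intro exI[of _ "Suc i"] exI[of _ "Suc j"]) auto
  qed
qed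

lemma simplex_le1: "in_simplex d c \<Longrightarrow> i < d \<Longrightarrow> c i \<le> 1"
proof -
  assume a: "in_simplex d c" "i < d"
  have "c i \<le> (\<Sum>k<d. c k)"
    using a by (intro member_le_sum) (auto simp: in_simplex_def)
  then show ?thesis using a by (simp add: in_simplex_def)
qed

lemma util_nonneg: "in_simplex d v \<Longrightarrow> in_simplex d c \<Longrightarrow> 0 \<le> util d v c"
  unfolding util_def in_simplex_def by (auto intro!: sum_nonneg)

lemma util_le1: "in_simplex d v \<Longrightarrow> in_simplex d c \<Longrightarrow> util d v c \<le> 1"
proof -
  assume a: "in_simplex d v" "in_simplex d c"
  have "util d v c \<le> (\<Sum>i<d. v i)"
    unfolding util_def
  proof (rule sum_mono)
    fix i assume "i \<in> {..<d}"
    then show "v i * c i \<le> v i"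
      using a simplex_le1[OF a(2)] by (auto simp: in_simplex_def intro: mult_left_le)
  qed
  then show ?thesis using a by (simp add: in_simplex_def)
qed

lemma coord_le_max:
  assumes "in_simplex d v" "in_cone d C v" "finite C" "\<forall>c\<in>C. in_simplex d c"
    "s \<in> C" "\<forall>c\<in>C. c j \<le> s j" "j < d"
  shows "v j \<le> s j"
proof -
  obtain a where a: "\<forall>c\<in>C. 0 \<le> a c" "\<forall>i<d. v i = (\<Sum>c\<in>C. a c * c i)"
    using assms(2) by (auto simp: in_cone_def)
  have "1 = (\<Sum>i<d. v i)" using assms(1) by (simp add: in_simplex_def)
  also have "\<dots> = (\<Sum>i<d. \<Sum>c\<in>C. a c * c i)" using a by simp
  also have "\<dots> = (\<Sum>c\<in>C. \<Sum>i<d. a c * c i)" by (rule sum.swap)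
  also have "\<dots> = (\<Sum>c\<in>C. a c * (\<Sum>i<d. c i))" by (simp add: sum_distrib_left)
  also have "\<dots> = (\<Sum>c\<in>C. a c)" using assms(4) by (auto simp: in_simplex_def)
  finally have s1: "(\<Sum>c\<in>C. a c) = 1" by simp
  have "v j = (\<Sum>c\<in>C. a c * c j)" using a assms(7) by simp
  also have "\<dots> \<le> (\<Sum>c\<in>C. a c * s j)"
    using a assms(6) by (intro sum_mono mult_left_mono) auto
  also have "\<dots> = s j" using s1 by (simp add: sum_distrib_right[symmetric])
  finally show ?thesis .
qed

lemma big_coord:
  assumes "in_simplex d v" "d \<ge> 1"
  shows "\<exists>j<d. v j \<ge> 1 / real d"
proof (rule ccontr)
  assume "\<not> ?thesis"
  then have "\<forall>j<d. v j < 1 / real d" by auto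
  then have "(\<Sum>j<d. v j) < (\<Sum>j<(d::nat). 1 / real d)"
    using assms(2) by (intro sum_strict_mono) (auto simp: lessThan_empty_iff)
  then show False using assms by (simp add: in_simplex_def)
qed

theorem theorem3:
  "\<exists>K::real. \<exists>d0::nat. \<forall>d\<ge>d0. \<forall>(V::nat set) vv C \<sigma> w.
     lsc_instance d V vv C \<longrightarrow> consistent_profile d V vv C \<sigma> \<longrightarrow> mcp_outcome d V C \<sigma> w \<longrightarrow>
     (\<forall>c\<in>C. UW d V vv c \<le> K * real d ^ 3 * UW d V vv w)"
proof (intro exI[of _ 1] exI[of _ 1] allI impI ballI)
  fix d :: nat and V :: "nat set" and vv C \<sigma> w c
  assume d1: "1 \<le> d" and inst: "lsc_instance d V vv C" and prof: "consistent_profile d V vv C \<sigma>"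
    and out: "mcp_outcome d V C \<sigma> w" and cC: "c \<in> C"
  have finV: "finite V" and finC: "finite C" and candS: "\<forall>c\<in>C. in_simplex d c"
    and vS: "\<And>v. v \<in> V \<Longrightarrow> in_simplex d (vv v)" and vCone: "\<And>v. v \<in> V \<Longrightarrow> in_cone d C (vv v)"
    using inst by (auto simp: lsc_instance_def)
  obtain Ch sel where sel: "\<forall>i<d. sel i \<in> C \<and> (\<forall>c\<in>C. c i \<le> sel i i)" and Ch: "Ch = sel ` {..<d}"
    and pw: "plurality_winner V \<sigma> Ch w"
    using out by (auto simp: mcp_outcome_def mcp_set_def)
  have wCh: "w \<in> Ch" using pw by (simp add: plurality_winner_def)
  have wC: "w \<in> C" using wCh Ch sel by auto
  define W where "W = {v\<in>V. top_in Ch (\<sigma> v) = w}"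
  have ChC: "Ch \<subseteq> C" using Ch sel by auto
  have top_in_Ch: "top_in Ch (\<sigma> v) \<in> Ch" if "v \<in> V" for v
  proof -
    have "sel 0 \<in> Ch" using Ch d1 by auto
    moreover have "set (\<sigma> v) = C" using prof that by (simp add: consistent_profile_def consistent_ranking_def)
    ultimately have "filter (\<lambda>c. c \<in> Ch) (\<sigma> v) \<noteq> []" using ChC
      by (metis (mono_tags, lifting) filter_empty_conv subsetD)
    then show ?thesis unfolding top_in_def
      by (metis (mono_tags, lifting) list.set_sel(1) mem_Collect_eq set_filter)
  qed
  have Veq: "V = (\<Union>x\<in>Ch. {v\<in>V. top_in Ch (\<sigma> v) = x})" using top_in_Ch by auto
  have finCh: "finite Ch" using Ch by simp
  have "card V \<le> (\<Sum>x\<in>Ch. card {v\<in>V. top_in Ch (\<sigma> v) = x})"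
    by (subst Veq) (rule card_UN_le[OF finCh])
  also have "\<dots> \<le> (\<Sum>x\<in>Ch. card W)"
    using pw unfolding W_def plurality_winner_def by (intro sum_mono) auto
  also have "\<dots> = card Ch * card W" by simp
  also have "\<dots> \<le> d * card W"
    using Ch card_image_le[of "{..<d}" sel] by (intro mult_right_mono) auto
  finally have cardV: "card V \<le> d * card W" .
  have good: "util d (vv v) w \<ge> 1 / (real d)^2" if "v \<in> W" for v
  proof -
    have vV: "v \<in> V" and tw: "top_in Ch (\<sigma> v) = w" using that W_def by auto
    obtain j where j: "j < d" "vv v j \<ge> 1 / real d" using big_coord[OF vS[OF vV] d1] by auto
    have sj: "sel j \<in> C" "\<forall>c\<in>C. c j \<le> sel j j" using sel j by auto
    have vj: "vv v j \<le> sel j j"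
      using coord_le_max[OF vS[OF vV] vCone[OF vV] finC candS sj j(1)] .
    have cr: "consistent_ranking d C (vv v) (\<sigma> v)" using prof vV by (simp add: consistent_profile_def)
    have "sel j \<in> set (\<sigma> v)" "sel j \<in> Ch" using cr sj Ch j by (auto simp: consistent_ranking_def)
    from top_pos[OF this(1), of "\<lambda>c. c \<in> Ch"] this(2) obtain a b where
      ab: "a \<le> b" "b < length (\<sigma> v)" "\<sigma> v ! a = w" "\<sigma> v ! b = sel j"
      using tw by (auto simp: top_in_def)
    have ge: "util d (vv v) (sel j) \<le> util d (vv v) w"
    proof (cases "a = b")
      case True then show ?thesis using ab by simp
    next
      case False
      then have "a < b" using ab by simp
      then have "util d (vv v) (\<sigma> v ! b) \<le> util d (vv v) (\<sigma> v ! a)"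
        using ab(2) cr unfolding consistent_ranking_def by blast
      then show ?thesis using ab by simp
    qed
    have "vv v j * sel j j \<le> util d (vv v) (sel j)"
      unfolding util_def using j vS[OF vV] candS sj
      by (intro member_le_sum[where f = "\<lambda>i. vv v i * sel j i"]) (auto simp: in_simplex_def)
    moreover have "vv v j * vv v j \<le> vv v j * sel j j"
      using vj j vS[OF vV] by (intro mult_left_mono) (auto simp: in_simplex_def)
    moreover have "1 / (real d)^2 \<le> vv v j * vv v j"
    proof -
      have "0 \<le> 1 / real d" by simp
      then have "(1/real d) * (1/real d) \<le> vv v j * vv v j" using j vS[OF vV] by (intro mult_mono) (auto simp: in_simplex_def)
      then show ?thesis by (simp add: power2_eq_square)
    qed
    ultimately show ?thesis using ge by linarith
  qed
  have "UW d V vv c \<le> (\<Sum>v\<in>V. 1)"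
    unfolding UW_def using util_le1 vS candS cC by (intro sum_mono) auto
  also have "\<dots> = real (card V)" by simp
  also have "\<dots> \<le> real d * real (card W)" using cardV by (metis of_nat_le_iff of_nat_mult)
  also have "\<dots> = real d ^ 3 * (\<Sum>v\<in>W. 1 / (real d)^2)"
    using d1 by (simp add: power2_eq_square power3_eq_cube)
  also have "\<dots> \<le> real d ^ 3 * (\<Sum>v\<in>W. util d (vv v) w)"
    using good by (intro mult_left_mono sum_mono) auto
  also have "\<dots> \<le> real d ^ 3 * UW d V vv w"
    unfolding UW_def using finV util_nonneg vS candS wC
    by (intro mult_left_mono sum_mono2) (auto simp: W_def)
  finally show "UW d V vv c \<le> 1 * real d ^ 3 * UW d V vv w" by simp
qed

end
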